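(* Let $X$ be a non-empty finite set and $\mathcal{P}$ a partition of $X$. Let $s$ be the number of distinct sizes of blocks of $\mathcal{P}$, and let $r$ be the number of sizes $m$ such that $\mathcal{P}$ has at least two blocks of size $m$. Then $\operatorname{rank}(T(X,\mathcal{P}):\Sigma(X,\mathcal{P}))=\binom{s}{2}+r$.
   Context: $T(X,\mathcal{P})$ is the semigroup (under composition) of maps $f:X\to X$ such that for every block $P$ of $\mathcal{P}$ there is a block $Q$ with $Pf\subseteq Q$; $\Sigma(X,\mathcal{P})$ is the subsemigroup of those $f\in T(X,\mathcal{P})$ whose image intersects every block of $\mathcal{P}$. For a subsemigroup $U$ of a semigroup $V$, the relative rank $\operatorname{rank}(V:U)$ is the least cardinality of a subset $W\subseteq V$ such that $U\cup W$ generates $V$ as a semigroup. *)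

theory Defs
  imports Main "HOL-Library.FuncSet" "HOL-Library.Disjoint_Sets"
begin

text \<open>Maps X -> X are represented as extensional functions (value undefined outside X),
so that distinct maps are distinct HOL functions. Composition is the restricted
composition from FuncSet.\<close>

definition T_part :: "'a set \<Rightarrow> 'a set set \<Rightarrow> ('a \<Rightarrow> 'a) set" where
  "T_part X P = {f \<in> X \<rightarrow>\<^sub>E X. \<forall>B\<in>P. \<exists>C\<in>P. f ` B \<subseteq> C}"

definition Sigma_part :: "'a set \<Rightarrow> 'a set set \<Rightarrow> ('a \<Rightarrow> 'a) set" where
  "Sigma_part X P = {f \<in> T_part X P. \<forall>B\<in>P. f ` X \<inter> B \<noteq> {}}"

inductive_set sgen :: "'a set \<Rightarrow> ('a \<Rightarrow> 'a) set \<Rightarrow> ('a \<Rightarrow> 'a) set"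
  for X :: "'a set" and S :: "('a \<Rightarrow> 'a) set" where
  base: "f \<in> S \<Longrightarrow> f \<in> sgen X S"
| comp: "f \<in> sgen X S \<Longrightarrow> g \<in> sgen X S \<Longrightarrow> compose X g f \<in> sgen X S"

text \<open>Relative rank rank(V:U): least cardinality of W \<subseteq> V with U \<union> W generating V.
(Used here only for finite X, so V is finite and W ranges over finite sets.)\<close>
definition relrank :: "'a set \<Rightarrow> ('a \<Rightarrow> 'a) set \<Rightarrow> ('a \<Rightarrow> 'a) set \<Rightarrow> nat" where
  "relrank X V U = (LEAST n. \<exists>W. W \<subseteq> V \<and> finite W \<and> card W = n \<and> sgen X (U \<union> W) = V)"

end

theory Submission
  imports Defs
begin


locale pctx =
  fixes X :: "'a set" and P :: "'a set set"
  assumes finX: "finite X" and part: "partition_on X P"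
begin

definition blk :: "'a \<Rightarrow> 'a set" where
  "blk x = (THE B. B \<in> P \<and> x \<in> B)"

lemma finP: "finite P" using finite_elements[OF finX part] .

lemma UnP: "\<Union>P = X" using partition_onD1[OF part] by simp

lemma nemP: "B \<in> P \<Longrightarrow> B \<noteq> {}" using partition_onD3[OF part] by auto

lemma subP: "B \<in> P \<Longrightarrow> B \<subseteq> X" using UnP by auto

lemma finB: "B \<in> P \<Longrightarrow> finite B" using subP finX finite_subset by blast

lemma disjP: "B \<in> P \<Longrightarrow> C \<in> P \<Longrightarrow> x \<in> B \<Longrightarrow> x \<in> C \<Longrightarrow> B = C"
  using partition_onD2[OF part] unfolding disjoint_def by blast

lemma blk_eq: "B \<in> P \<Longrightarrow> x \<in> B \<Longrightarrow> blk x = B"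
  unfolding blk_def by (rule the_equality) (use disjP in blast)+

lemma blk_ex: "x \<in> X \<Longrightarrow> \<exists>B\<in>P. x \<in> B" using UnP by auto

lemma blk_P: "x \<in> X \<Longrightarrow> blk x \<in> P" using blk_ex blk_eq by metis

lemma blk_mem: "x \<in> X \<Longrightarrow> x \<in> blk x" using blk_ex blk_eq by metis

lemma blk_X: "x \<in> X \<Longrightarrow> blk x \<subseteq> X" using blk_P subP by blast

lemma blk_same: "x \<in> X \<Longrightarrow> y \<in> blk x \<Longrightarrow> blk y = blk x"
  using blk_P blk_eq by blast

lemma P_eq: "P = blk ` X"
proof
  show "P \<subseteq> blk ` X"
  proof
    fix B assume "B \<in> P" then obtain x where "x \<in> B" using nemP by blast
    then show "B \<in> blk ` X" using \<open>B \<in> P\<close> blk_eq subP by blast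
  qed
qed (auto simp: blk_P)

lemma T_char: "f \<in> T_part X P \<longleftrightarrow> f \<in> X \<rightarrow>\<^sub>E X \<and> (\<forall>x\<in>X. \<forall>y\<in>X. blk x = blk y \<longrightarrow> blk (f x) = blk (f y))"
proof
  assume f: "f \<in> T_part X P"
  then have fE: "f \<in> X \<rightarrow>\<^sub>E X" unfolding T_part_def by blast
  moreover have hb: "blk (f x) = blk (f y)" if "x \<in> X" "y \<in> X" "blk x = blk y" for x y
  proof -
    obtain C where C: "C \<in> P" "f ` blk x \<subseteq> C" using f blk_P[OF \<open>x\<in>X\<close>] unfolding T_part_def by blast
    have "x \<in> blk x" "y \<in> blk x" using blk_mem that by auto
    then have "f x \<in> C" "f y \<in> C" using C by auto
    then show ?thesis using blk_eq C by metis
  qed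
  show "f \<in> X \<rightarrow>\<^sub>E X \<and> (\<forall>x\<in>X. \<forall>y\<in>X. blk x = blk y \<longrightarrow> blk (f x) = blk (f y))"
    using fE hb by blast
next
  assume a: "f \<in> X \<rightarrow>\<^sub>E X \<and> (\<forall>x\<in>X. \<forall>y\<in>X. blk x = blk y \<longrightarrow> blk (f x) = blk (f y))"
  from a have fE: "f \<in> X \<rightarrow>\<^sub>E X" and fb: "\<And>x y. x\<in>X \<Longrightarrow> y\<in>X \<Longrightarrow> blk x = blk y \<Longrightarrow> blk (f x) = blk (f y)" by blast+
  have key: "\<exists>C\<in>P. f ` B \<subseteq> C" if B: "B \<in> P" for B
  proof -
    obtain x where x: "x \<in> B" using nemP B by blast
    have xX: "x \<in> X" using x B subP by blast
    have "f ` B \<subseteq> blk (f x)"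
    proof
      fix z assume "z \<in> f ` B" then obtain y where y: "y \<in> B" "z = f y" by blast
      have yX: "y \<in> X" using y B subP by blast
      have "blk x = blk y" using blk_eq B x y by simp
      then have "blk (f y) = blk (f x)" using fb xX yX by metis
      moreover have "f y \<in> X" using fE yX by (rule PiE_mem)
      ultimately show "z \<in> blk (f x)" using y blk_mem by metis
    qed
    moreover have "f x \<in> X" using fE xX by (rule PiE_mem)
    ultimately show ?thesis using blk_P by blast
  qed
  show "f \<in> T_part X P" unfolding T_part_def mem_Collect_eq
    using fE key by blast
qed

lemma TD: "f \<in> T_part X P \<Longrightarrow> x \<in> X \<Longrightarrow> y \<in> X \<Longrightarrow> blk x = blk y \<Longrightarrow> blk (f x) = blk (f y)"
  using T_char by blast

lemma TX: "f \<in> T_part X P \<Longrightarrow> x \<in> X \<Longrightarrow> f x \<in> X"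
  by (auto simp: T_part_def)

lemma Text: "f \<in> T_part X P \<Longrightarrow> x \<notin> X \<Longrightarrow> f x = undefined"
  by (auto simp: T_part_def)

definition IB :: "('a \<Rightarrow> 'a) \<Rightarrow> 'a set set" where
  "IB f = blk ` f ` X"

lemma IB_sub: "f \<in> T_part X P \<Longrightarrow> IB f \<subseteq> P"
  unfolding IB_def using TX blk_P by blast

lemma S_char: "f \<in> Sigma_part X P \<longleftrightarrow> f \<in> T_part X P \<and> IB f = P"
proof -
  have "(\<forall>B\<in>P. f ` X \<inter> B \<noteq> {}) \<longleftrightarrow> IB f = P" if f: "f \<in> T_part X P"
  proof
    assume a: "\<forall>B\<in>P. f ` X \<inter> B \<noteq> {}"
    show "IB f = P"
    proof
      show "IB f \<subseteq> P" using f by (rule IB_sub)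
      show "P \<subseteq> IB f"
      proof
        fix B assume B: "B \<in> P"
        then obtain x where x: "x \<in> X" "f x \<in> B" using a by blast
        then have "blk (f x) = B" using blk_eq B by metis
        then show "B \<in> IB f" using x unfolding IB_def by blast
      qed
    qed
  next
    assume a: "IB f = P"
    show "\<forall>B\<in>P. f ` X \<inter> B \<noteq> {}"
    proof
      fix B assume "B \<in> P"
      then obtain x where x: "x \<in> X" "B = blk (f x)" using a unfolding IB_def by blast
      have "f x \<in> B" using x TX[OF f] blk_mem by metis
      then show "f ` X \<inter> B \<noteq> {}" using x(1) by (metis IntI empty_iff imageI)
    qed
  qed
  then show ?thesis unfolding Sigma_part_def mem_Collect_eq by (metis (no_types, lifting))
qed

lemma compose_T: assumes f: "f \<in> T_part X P" and g: "g \<in> T_part X P" shows "compose X g f \<in> T_part X P"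
  unfolding T_char
proof
  show "compose X g f \<in> X \<rightarrow>\<^sub>E X" using f g by (auto simp: T_part_def compose_def)
  show "\<forall>x\<in>X. \<forall>y\<in>X. blk x = blk y \<longrightarrow> blk (compose X g f x) = blk (compose X g f y)"
  proof (intro ballI impI)
    fix x y assume xy: "x \<in> X" "y \<in> X" "blk x = blk y"
    have "blk (f x) = blk (f y)" using TD[OF f xy] .
    then have "blk (g (f x)) = blk (g (f y))" using TD[OF g] TX[OF f] xy by blast
    then show "blk (compose X g f x) = blk (compose X g f y)" using xy by (simp add: compose_def)
  qed
qed

lemma sgen_T: assumes "f \<in> sgen X S" "S \<subseteq> T_part X P" shows "f \<in> T_part X P"
  using assms(1) by induction (use assms(2) compose_T in auto)

lemma S_T: "Sigma_part X P \<subseteq> T_part X P" by (auto simp: Sigma_part_def)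

end

context pctx begin

abbreviation "TT \<equiv> T_part X P"
abbreviation "SS \<equiv> Sigma_part X P"

definition rep :: "'a set \<Rightarrow> 'a" where "rep E = (SOME z. z \<in> E)"

lemma rep_in: "E \<in> P \<Longrightarrow> rep E \<in> E"
  unfolding rep_def using nemP by (metis ex_in_conv someI)

lemma rep_X: "E \<in> P \<Longrightarrow> rep E \<in> X" using rep_in subP by blast

lemma rep_blk: "E \<in> P \<Longrightarrow> blk (rep E) = E" using rep_in blk_eq by blast

lemma left_factor:
  assumes f: "f \<in> TT" and h: "h \<in> TT"
    and ker: "\<And>x y. x\<in>X \<Longrightarrow> y\<in>X \<Longrightarrow> h x = h y \<Longrightarrow> f x = f y"
    and bker: "\<And>x y. x\<in>X \<Longrightarrow> y\<in>X \<Longrightarrow> blk (h x) = blk (h y) \<longleftrightarrow> blk (f x) = blk (f y)"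
  shows "\<exists>\<sigma> \<in> SS. f = compose X \<sigma> h"
proof -
  define tg where "tg E = blk (f (SOME x. x \<in> X \<and> blk (h x) = E))" for E
  have tg_eq: "tg (blk (h x)) = blk (f x)" if x: "x \<in> X" for x
  proof -
    have "\<exists>x'. x' \<in> X \<and> blk (h x') = blk (h x)" using x by blast
    then have "(SOME x'. x' \<in> X \<and> blk (h x') = blk (h x)) \<in> X \<and> blk (h (SOME x'. x' \<in> X \<and> blk (h x') = blk (h x))) = blk (h x)"
      by (rule someI_ex)
    then show ?thesis unfolding tg_def using bker x by blast
  qed
  have fHh: "finite (IB h)" "finite (IB f)" using IB_sub[OF h] IB_sub[OF f] finP finite_subset by blast+
  have tgim: "tg ` IB h = IB f"
  proof
    show "tg ` IB h \<subseteq> IB f" unfolding IB_def using tg_eq by auto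
    show "IB f \<subseteq> tg ` IB h"
    proof
      fix B assume "B \<in> IB f"
      then obtain x where x: "x \<in> X" "B = blk (f x)" unfolding IB_def by blast
      then have "B = tg (blk (h x))" using tg_eq by simp
      then show "B \<in> tg ` IB h" using x unfolding IB_def by blast
    qed
  qed
  have tginj: "inj_on tg (IB h)"
  proof
    fix E E' assume "E \<in> IB h" "E' \<in> IB h" and e: "tg E = tg E'"
    then obtain x x' where x: "x \<in> X" "E = blk (h x)" "x' \<in> X" "E' = blk (h x')" unfolding IB_def by blast
    then have "blk (f x) = blk (f x')" using e tg_eq by simp
    then show "E = E'" using bker x by blast
  qed
  have cardeq: "card (IB h) = card (IB f)" using tgim tginj card_image by fastforce
  have "card (P - IB h) = card (P - IB f)"
    using cardeq IB_sub[OF h] IB_sub[OF f] fHh by (simp add: card_Diff_subset)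
  then obtain \<beta> where \<beta>: "bij_betw \<beta> (P - IB h) (P - IB f)"
    using finite_same_card_bij finP by (metis finite_Diff)
  define tgt where "tgt E = (if E \<in> IB h then tg E else \<beta> E)" for E
  have tgtP: "tgt E \<in> P" if "E \<in> P" for E
  proof (cases "E \<in> IB h")
    case True then show ?thesis using tgim IB_sub[OF f] unfolding tgt_def by auto
  next
    case False then show ?thesis using \<beta> that unfolding tgt_def bij_betw_def by auto
  qed
  define \<sigma> where "\<sigma> z = (if z \<in> X then (if z \<in> h ` X then f (SOME x. x \<in> X \<and> h x = z) else rep (tgt (blk z))) else undefined)" for z
  have \<sigma>h: "\<sigma> (h x) = f x" if x: "x \<in> X" for x
  proof -
    have hx: "h x \<in> X" using TX[OF h x] .
    have "\<exists>x'. x' \<in> X \<and> h x' = h x" using x by blast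
    then have "(SOME x'. x' \<in> X \<and> h x' = h x) \<in> X \<and> h (SOME x'. x' \<in> X \<and> h x' = h x) = h x"
      by (rule someI_ex)
    then have "f (SOME x'. x' \<in> X \<and> h x' = h x) = f x" using ker x by blast
    then show ?thesis unfolding \<sigma>_def using hx x by auto
  qed
  have \<sigma>blk: "\<sigma> z \<in> X \<and> blk (\<sigma> z) = tgt (blk z)" if z: "z \<in> X" for z
  proof (cases "z \<in> h ` X")
    case True
    then obtain x where x: "x \<in> X" "z = h x" by blast
    have "blk z \<in> IB h" using x unfolding IB_def by blast
    then have "tgt (blk z) = blk (f x)" unfolding tgt_def using tg_eq x by simp
    then show ?thesis using \<sigma>h x TX[OF f] by simp
  next
    case False
    then have "\<sigma> z = rep (tgt (blk z))" unfolding \<sigma>_def using z by simp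
    then show ?thesis using rep_X rep_blk tgtP blk_P z by simp
  qed
  have \<sigma>T: "\<sigma> \<in> TT"
    unfolding T_char
  proof
    show "\<sigma> \<in> X \<rightarrow>\<^sub>E X" using \<sigma>blk unfolding \<sigma>_def by auto
    show "\<forall>x\<in>X. \<forall>y\<in>X. blk x = blk y \<longrightarrow> blk (\<sigma> x) = blk (\<sigma> y)" using \<sigma>blk by metis
  qed
  have "IB \<sigma> = P"
  proof
    show "IB \<sigma> \<subseteq> P" using IB_sub[OF \<sigma>T] .
    show "P \<subseteq> IB \<sigma>"
    proof
      fix B assume B: "B \<in> P"
      show "B \<in> IB \<sigma>"
      proof (cases "B \<in> IB f")
        case True
        then obtain x where x: "x \<in> X" "B = blk (f x)" unfolding IB_def by blast
        then have "B = blk (\<sigma> (h x))" using \<sigma>h by simp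
        then show ?thesis using TX[OF h x(1)] unfolding IB_def by blast
      next
        case False
        then have "B \<in> P - IB f" using B by blast
        then obtain E where E: "E \<in> P - IB h" "B = \<beta> E" using \<beta> unfolding bij_betw_def by blast
        have "tgt (blk (rep E)) = B" using E rep_blk unfolding tgt_def by simp
        then have "blk (\<sigma> (rep E)) = B" using \<sigma>blk rep_X E by blast
        then show ?thesis using rep_X E unfolding IB_def by blast
      qed
    qed
  qed
  then have "\<sigma> \<in> SS" using S_char \<sigma>T by blast
  moreover have "f = compose X \<sigma> h"
  proof
    fix x show "f x = compose X \<sigma> h x"
      using \<sigma>h Text[OF f] by (cases "x \<in> X") (auto simp: compose_def)
  qed
  ultimately show ?thesis by blast
qed

end

context pctx begin

definition bm :: "('a \<Rightarrow> 'a) \<Rightarrow> 'a set \<Rightarrow> 'a set" where "bm f E = blk (f (rep E))"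

lemma bm_eq: assumes f: "f \<in> TT" and x: "x \<in> X" shows "bm f (blk x) = blk (f x)"
proof -
  have "rep (blk x) \<in> X" "blk (rep (blk x)) = blk x" using rep_X rep_blk blk_P x by auto
  then show ?thesis unfolding bm_def using TD[OF f] x by blast
qed

lemma bmP: "f \<in> TT \<Longrightarrow> E \<in> P \<Longrightarrow> bm f E \<in> P"
  unfolding bm_def using rep_X TX blk_P by blast

lemma IB_bm: assumes f: "f \<in> TT" shows "IB f = bm f ` P"
proof -
  have "IB f = (\<lambda>x. bm f (blk x)) ` X" unfolding IB_def using bm_eq[OF f] by (auto simp: image_image)
  also have "\<dots> = bm f ` P" by (metis P_eq image_image)
  finally show ?thesis .
qed

lemma S_inj: assumes f: "f \<in> TT" shows "f \<in> SS \<longleftrightarrow> inj_on (bm f) P"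
proof
  assume "f \<in> SS"
  then have "bm f ` P = P" using S_char IB_bm f by auto
  then show "inj_on (bm f) P" using eq_card_imp_inj_on finP by metis
next
  assume "inj_on (bm f) P"
  then have "bm f ` P = P" using endo_inj_surj finP bmP[OF f] by blast
  then show "f \<in> SS" using S_char IB_bm f by auto
qed

definition Inj :: "('a \<Rightarrow> 'a) \<Rightarrow> bool" where
  "Inj f \<longleftrightarrow> (\<forall>x\<in>X. \<forall>y\<in>X. blk x = blk y \<longrightarrow> f x = f y \<longrightarrow> x = y)"

definition coll :: "('a \<Rightarrow> 'a) \<Rightarrow> ('a \<times> 'a) set" where
  "coll f = {(x,y). x \<in> X \<and> y \<in> X \<and> blk x \<noteq> blk y \<and> blk (f x) = blk (f y)}"

definition types :: "('a \<Rightarrow> 'a) \<Rightarrow> nat set set" where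
  "types f = (\<lambda>(x,y). {card (blk x), card (blk y)}) ` coll f"

lemma coll_empty_iff: assumes f: "f \<in> TT" shows "coll f = {} \<longleftrightarrow> inj_on (bm f) P"
proof
  assume c: "coll f = {}"
  show "inj_on (bm f) P"
  proof
    fix E E' assume E: "E \<in> P" "E' \<in> P" and e: "bm f E = bm f E'"
    have r: "rep E \<in> X" "rep E' \<in> X" "blk (rep E) = E" "blk (rep E') = E'" using E rep_X rep_blk by auto
    then have "blk (f (rep E)) = blk (f (rep E'))" using e unfolding bm_def by simp
    then show "E = E'" using c r unfolding coll_def by blast
  qed
next
  assume i: "inj_on (bm f) P"
  show "coll f = {}"
  proof (rule ccontr)
    assume "coll f \<noteq> {}"
    then obtain x y where xy: "x \<in> X" "y \<in> X" "blk x \<noteq> blk y" "blk (f x) = blk (f y)" unfolding coll_def by blast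
    then have "bm f (blk x) = bm f (blk y)" using bm_eq[OF f] by simp
    then show False using i xy blk_P unfolding inj_on_def by blast
  qed
qed

lemma S_coll: "f \<in> TT \<Longrightarrow> f \<in> SS \<longleftrightarrow> coll f = {}"
  using S_inj coll_empty_iff by blast

lemma S_onto: assumes h: "h \<in> SS" and hi: "Inj h" and x: "x \<in> X"
  shows "h ` blk x = blk (h x)" "card (blk (h x)) = card (blk x)"
proof -
  have hT: "h \<in> TT" using h S_T by blast
  have inj: "inj_on (bm h) P" using S_inj hT h by blast
  have le: "card E \<le> card (bm h E)" if E: "E \<in> P" for E
  proof -
    have "h ` E \<subseteq> bm h E"
    proof
      fix z assume "z \<in> h ` E" then obtain y where y: "y \<in> E" "z = h y" by blast
      then have "y \<in> X" "blk y = E" using E subP blk_eq by blast+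
      then have "bm h E = blk (h y)" using bm_eq[OF hT] by metis
      then show "z \<in> bm h E" using y blk_mem TX[OF hT] \<open>y \<in> X\<close> by simp
    qed
    moreover have "inj_on h E" using hi E subP blk_eq unfolding Inj_def inj_on_def by (metis subsetD)
    ultimately show ?thesis using card_inj_on_le finB bmP[OF hT E] by metis
  qed
  have "sum card P = sum card (bm h ` P)" using endo_inj_surj finP bmP[OF hT] inj by (metis image_subsetI)
  also have "\<dots> = sum (\<lambda>E. card (bm h E)) P" using sum.reindex[OF inj] by simp
  finally have eqs: "sum card P = sum (\<lambda>E. card (bm h E)) P" .
  have ceq: "card (blk x) = card (bm h (blk x))"
    using sum_mono_inv[OF eqs le] blk_P[OF x] finP by blast
  then show "card (blk (h x)) = card (blk x)" using bm_eq[OF hT x] by simp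
  have sub: "h ` blk x \<subseteq> blk (h x)"
  proof
    fix z assume "z \<in> h ` blk x" then obtain y where y: "y \<in> blk x" "z = h y" by blast
    then have "y \<in> X" "blk y = blk x" using blk_X[OF x] blk_same[OF x] by blast+
    then have "blk (h y) = blk (h x)" using TD[OF hT] x by blast
    then show "z \<in> blk (h x)" using y blk_mem TX[OF hT] \<open>y \<in> X\<close> by metis
  qed
  have "inj_on h (blk x)" using hi blk_X[OF x] blk_same x unfolding Inj_def inj_on_def by (metis subsetD)
  then have "card (h ` blk x) = card (blk (h x))" using card_image ceq bm_eq[OF hT x] by metis
  then show "h ` blk x = blk (h x)" using card_subset_eq[OF finB[OF blk_P[OF TX[OF hT x]]] sub] by simp
qed

lemma S_surj: assumes h: "h \<in> SS" and hi: "Inj h" shows "h ` X = X"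
proof
  have hT: "h \<in> TT" using h S_T by blast
  show "h ` X \<subseteq> X" using TX[OF hT] by blast
  show "X \<subseteq> h ` X"
  proof
    fix z assume z: "z \<in> X"
    have "blk z \<in> IB h" using S_char h blk_P z by simp
    then obtain x where x: "x \<in> X" "blk z = blk (h x)" unfolding IB_def by blast
    then have "z \<in> h ` blk x" using S_onto[OF h hi x(1)] blk_mem[OF z] by metis
    then show "z \<in> h ` X" using blk_X x by blast
  qed
qed

lemma lower_key:
  assumes "f \<in> sgen X (SS \<union> W)" and W: "W \<subseteq> TT"
  shows "Inj f \<Longrightarrow> types f = {t} \<Longrightarrow> \<exists>w\<in>W. types w = {t}"
  using assms(1)
proof (induction arbitrary: t)
  case (base f)
  show ?case
  proof (cases "f \<in> SS")
    case True
    then have "coll f = {}" using S_coll S_T by blast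
    then show ?thesis using base.prems unfolding types_def by simp
  next
    case False then show ?thesis using base by blast
  qed
next
  case (comp h g)
  have hT: "h \<in> TT" and gT: "g \<in> TT" using sgen_T comp.hyps W S_T by blast+
  let ?f = "compose X g h"
  have fx: "?f x = g (h x)" if "x \<in> X" for x using that by (simp add: compose_def)
  have hi: "Inj h"
  proof -
    have "x = y" if "x \<in> X" "y \<in> X" "blk x = blk y" "h x = h y" for x y
      using comp.prems(1) that fx unfolding Inj_def by metis
    then show ?thesis unfolding Inj_def by blast
  qed
  show ?case
  proof (cases "coll h = {}")
    case False
    have "coll h \<subseteq> coll ?f"
    proof
      fix p assume "p \<in> coll h"
      then obtain x y where p: "p = (x,y)" "x \<in> X" "y \<in> X" "blk x \<noteq> blk y" "blk (h x) = blk (h y)"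
        unfolding coll_def by blast
      then have "blk (g (h x)) = blk (g (h y))" using TD[OF gT] TX[OF hT] by blast
      then show "p \<in> coll ?f" using p fx unfolding coll_def by simp
    qed
    then have "types h \<subseteq> types ?f" unfolding types_def by (rule image_mono)
    then have "types h \<subseteq> {t}" using comp.prems(2) by simp
    moreover have "types h \<noteq> {}" using False unfolding types_def by simp
    ultimately have "types h = {t}" by blast
    then show ?thesis using comp.IH(1) hi by blast
  next
    case True
    then have hS: "h \<in> SS" using S_coll hT by blast
    have nc: "blk x = blk y" if "x \<in> X" "y \<in> X" "blk (h x) = blk (h y)" for x y
      using True that unfolding coll_def by blast
    have hsurj: "h ` X = X" using S_surj hS hi .
    have gi: "Inj g"
      unfolding Inj_def
    proof (intro ballI impI)
      fix u v assume uv: "u \<in> X" "v \<in> X" "blk u = blk v" "g u = g v"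
      have "u \<in> h ` X" "v \<in> h ` X" using hsurj uv(1,2) by simp_all
      then obtain x y where xy: "x \<in> X" "y \<in> X" "u = h x" "v = h y" by (meson imageE)
      then have "blk x = blk y" using nc uv by metis
      moreover have "?f x = ?f y" using fx xy uv by simp
      ultimately have "x = y" using comp.prems(1) xy unfolding Inj_def by blast
      then show "u = v" using xy by simp
    qed
    have "types g = types ?f"
    proof
      show "types g \<subseteq> types ?f"
      proof
        fix s assume "s \<in> types g"
        then obtain u v where uv: "(u,v) \<in> coll g" "s = {card (blk u), card (blk v)}" unfolding types_def by auto
        then have uv': "u \<in> X" "v \<in> X" "blk u \<noteq> blk v" "blk (g u) = blk (g v)" unfolding coll_def by auto
        have "u \<in> h ` X" "v \<in> h ` X" using hsurj uv'(1,2) by simp_all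
        then obtain x y where xy: "x \<in> X" "y \<in> X" "u = h x" "v = h y" by (meson imageE)
        have "blk x \<noteq> blk y" using TD[OF hT] xy uv' by metis
        then have "(x,y) \<in> coll ?f" using xy uv' fx unfolding coll_def by simp
        moreover have "s = {card (blk x), card (blk y)}" using uv S_onto(2)[OF hS hi] xy by simp
        ultimately show "s \<in> types ?f" unfolding types_def by force
      qed
      show "types ?f \<subseteq> types g"
      proof
        fix s assume "s \<in> types ?f"
        then obtain x y where xy: "(x,y) \<in> coll ?f" "s = {card (blk x), card (blk y)}" unfolding types_def by auto
        then have xy': "x \<in> X" "y \<in> X" "blk x \<noteq> blk y" "blk (g (h x)) = blk (g (h y))" unfolding coll_def using fx by auto
        have "blk (h x) \<noteq> blk (h y)" using nc xy' by metis
        then have "(h x, h y) \<in> coll g" using xy' TX[OF hT] unfolding coll_def by simp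
        moreover have "s = {card (blk (h x)), card (blk (h y))}" using xy S_onto(2)[OF hS hi] xy' by simp
        ultimately show "s \<in> types g" unfolding types_def by force
      qed
    qed
    then show ?thesis using comp.IH(2) gi comp.prems(2) by simp
  qed
qed

end

context pctx begin

definition mg :: "'a set \<Rightarrow> 'a set \<Rightarrow> ('a \<Rightarrow> 'a) \<Rightarrow> 'a \<Rightarrow> 'a" where
  "mg U C \<phi> = (\<lambda>x. if x \<in> U then \<phi> x else if x \<in> X then x else undefined)"

lemma mg_blk: assumes U: "U \<in> P" and C: "C \<in> P" and \<phi>: "\<phi> ` U \<subseteq> C" and x: "x \<in> X"
  shows "mg U C \<phi> x \<in> X" "blk (mg U C \<phi> x) = (if blk x = U then C else blk x)"
proof -
  show "mg U C \<phi> x \<in> X" using \<phi> x subP[OF C] unfolding mg_def by auto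
  show "blk (mg U C \<phi> x) = (if blk x = U then C else blk x)"
  proof (cases "x \<in> U")
    case True
    then have "blk x = U" using blk_eq U by blast
    moreover have "\<phi> x \<in> C" using \<phi> True by blast
    ultimately show ?thesis using True blk_eq[OF C] unfolding mg_def by simp
  next
    case False
    then have "blk x \<noteq> U" using blk_mem x by metis
    then show ?thesis using False x unfolding mg_def by simp
  qed
qed

lemma mg_T: assumes U: "U \<in> P" and C: "C \<in> P" and \<phi>: "\<phi> ` U \<subseteq> C" shows "mg U C \<phi> \<in> TT"
  unfolding T_char
proof
  show "mg U C \<phi> \<in> X \<rightarrow>\<^sub>E X" using mg_blk(1)[OF U C \<phi>] subP[OF U] unfolding mg_def by auto
  show "\<forall>x\<in>X. \<forall>y\<in>X. blk x = blk y \<longrightarrow> blk (mg U C \<phi> x) = blk (mg U C \<phi> y)"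
    using mg_blk(2)[OF U C \<phi>] by metis
qed

lemma wit_props:
  assumes A: "A \<in> P" and B: "B \<in> P" and AB: "A \<noteq> B" and \<iota>: "inj_on \<iota> A" "\<iota> ` A \<subseteq> B"
  shows "Inj (mg A B \<iota>)" "types (mg A B \<iota>) = {{card A, card B}}"
proof -
  show "Inj (mg A B \<iota>)" unfolding Inj_def
  proof (intro ballI impI)
    fix x y assume xy: "x \<in> X" "y \<in> X" "blk x = blk y" "mg A B \<iota> x = mg A B \<iota> y"
    show "x = y"
    proof (cases "x \<in> A")
      case True
      then have "y \<in> A" using xy blk_eq[OF A] blk_mem by metis
      then show ?thesis using True xy \<iota>(1) unfolding mg_def inj_on_def by simp
    next
      case False
      then have "y \<notin> A" using xy blk_eq[OF A] blk_mem by metis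
      then show ?thesis using False xy unfolding mg_def by simp
    qed
  qed
  have cl: "blk x = A \<and> blk y = B \<or> blk x = B \<and> blk y = A" if "(x,y) \<in> coll (mg A B \<iota>)" for x y
    using that mg_blk(2)[OF A B \<iota>(2)] unfolding coll_def by (auto split: if_splits)
  obtain a b where ab: "a \<in> A" "b \<in> B" using nemP A B by blast
  have abX: "a \<in> X" "b \<in> X" using ab subP A B by auto
  have "(a,b) \<in> coll (mg A B \<iota>)"
    using mg_blk(2)[OF A B \<iota>(2)] abX blk_eq[OF A ab(1)] blk_eq[OF B ab(2)] AB unfolding coll_def by simp
  then have ne: "coll (mg A B \<iota>) \<noteq> {}" by blast
  show "types (mg A B \<iota>) = {{card A, card B}}"
  proof
    show "types (mg A B \<iota>) \<subseteq> {{card A, card B}}"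
      unfolding types_def using cl by (force simp: insert_commute)
    show "{{card A, card B}} \<subseteq> types (mg A B \<iota>)"
      using \<open>(a,b) \<in> coll (mg A B \<iota>)\<close> blk_eq[OF A ab(1)] blk_eq[OF B ab(2)] unfolding types_def by force
  qed
qed

end

context pctx begin

definition BP :: "('a \<Rightarrow> 'a) \<Rightarrow> bool" where
  "BP R \<longleftrightarrow> R \<in> X \<rightarrow>\<^sub>E X \<and> inj_on R X \<and> (\<forall>x\<in>X. R ` blk x = blk (R x))"

lemma BP_D: assumes "BP R"
  shows "R \<in> X \<rightarrow>\<^sub>E X" "inj_on R X" "\<And>x. x \<in> X \<Longrightarrow> R ` blk x = blk (R x)" "\<And>x. x \<in> X \<Longrightarrow> R x \<in> X"
  using assms unfolding BP_def by (blast, blast, blast, blast intro: PiE_mem)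

lemma BP_T: assumes "BP R" shows "R \<in> TT"
  unfolding T_char
proof
  show "R \<in> X \<rightarrow>\<^sub>E X" using assms unfolding BP_def by blast
  show "\<forall>x\<in>X. \<forall>y\<in>X. blk x = blk y \<longrightarrow> blk (R x) = blk (R y)"
    using assms unfolding BP_def by metis
qed

lemma BP_X: assumes "BP R" shows "R ` X = X"
proof -
  have "R ` X \<subseteq> X" using BP_D(4)[OF assms] by blast
  then show ?thesis using endo_inj_surj[OF finX _ BP_D(2)[OF assms]] by blast
qed

lemma BP_S: assumes R: "BP R" shows "R \<in> SS"
proof -
  have "IB R = P"
  proof
    show "IB R \<subseteq> P" using IB_sub BP_T R by blast
    show "P \<subseteq> IB R"
    proof
      fix B assume B: "B \<in> P"
      then have "rep B \<in> R ` X" using BP_X[OF R] rep_X by simp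
      then obtain x where "x \<in> X" "rep B = R x" by blast
      then show "B \<in> IB R" using rep_blk[OF B] unfolding IB_def by (metis imageI)
    qed
  qed
  then show ?thesis using S_char BP_T R by blast
qed

lemma BP_Inj: "BP R \<Longrightarrow> Inj R" unfolding BP_def Inj_def inj_on_def by blast

lemma BP_img: assumes R: "BP R" and Y: "Y \<in> P" shows "R ` Y \<in> P" "card (R ` Y) = card Y"
proof -
  have "R ` Y = blk (R (rep Y))" using BP_D(3)[OF R rep_X[OF Y]] rep_blk[OF Y] by simp
  then show "R ` Y \<in> P" using blk_P TX[OF BP_T[OF R] rep_X[OF Y]] by simp
  have "inj_on R Y" using BP_D(2)[OF R] subP[OF Y] by (metis inj_on_subset)
  then show "card (R ` Y) = card Y" by (rule card_image)
qed

lemma BP_img_inj: assumes R: "BP R" and Y: "Y \<in> P" and Y': "Y' \<in> P" and e: "R ` Y = R ` Y'" shows "Y = Y'"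
proof -
  have "R (rep Y) \<in> R ` Y'" using e rep_in[OF Y] by blast
  then obtain y where y: "y \<in> Y'" "R (rep Y) = R y" by blast
  then have "rep Y = y" using BP_D(2)[OF R] rep_X[OF Y] subP[OF Y'] unfolding inj_on_def by blast
  then show ?thesis using disjP[OF Y Y'] rep_in[OF Y] y by blast
qed

lemma compose_img: "A \<subseteq> X \<Longrightarrow> compose X g f ` A = g ` f ` A"
  unfolding compose_def by (auto simp: image_iff subset_iff)

lemma BP_compose: assumes R: "BP R" and R': "BP R'" shows "BP (compose X R' R)"
  unfolding BP_def
proof (intro conjI ballI)
  have RX: "R ` X \<subseteq> X" using BP_X[OF R] by simp
  show "compose X R' R \<in> X \<rightarrow>\<^sub>E X" using BP_D(4)[OF R] BP_D(4)[OF R'] unfolding compose_def by auto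
  have "inj_on (R' \<circ> R) X" using BP_D(2)[OF R] BP_D(2)[OF R'] RX by (metis comp_inj_on inj_on_subset)
  then show "inj_on (compose X R' R) X" unfolding compose_def by (simp add: inj_on_def)
  fix x assume x: "x \<in> X"
  have "compose X R' R ` blk x = R' ` R ` blk x" using blk_X[OF x] by (rule compose_img)
  also have "\<dots> = R' ` blk (R x)" using BP_D(3)[OF R x] by simp
  also have "\<dots> = blk (R' (R x))" using BP_D(3)[OF R'] BP_D(4)[OF R x] by blast
  finally show "compose X R' R ` blk x = blk (compose X R' R x)" using x by (simp add: compose_def)
qed

definition tr :: "'a set \<Rightarrow> 'a set \<Rightarrow> ('a \<Rightarrow> 'a) \<Rightarrow> 'a \<Rightarrow> 'a" where
  "tr Y Y' \<beta> = (\<lambda>x. if x \<in> Y then \<beta> x else if x \<in> Y' then inv_into Y \<beta> x else if x \<in> X then x else undefined)"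

lemma tr_props:
  assumes Y: "Y \<in> P" and Y': "Y' \<in> P" and \<beta>: "bij_betw \<beta> Y Y'"
  defines "img Z \<equiv> (if Z = Y then Y' else if Z = Y' then Y else Z)"
  shows "BP (tr Y Y' \<beta>)" "\<And>Z. Z \<in> P \<Longrightarrow> tr Y Y' \<beta> ` Z = img Z"
proof -
  let ?t = "tr Y Y' \<beta>"
  have \<beta>': "bij_betw (inv_into Y \<beta>) Y' Y" using \<beta> by (rule bij_betw_inv_into)
  have imgP: "img Z \<in> P" if "Z \<in> P" for Z using that Y Y' unfolding img_def by auto
  have imgi: "Z = Z'" if "Z \<in> P" "Z' \<in> P" "img Z = img Z'" for Z Z'
    using that unfolding img_def by (auto split: if_splits)
  have injZ: "inj_on ?t Z" if Z: "Z \<in> P" for Z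
  proof (cases "Z = Y")
    case True then show ?thesis using \<beta> unfolding tr_def bij_betw_def inj_on_def by simp
  next
    case False
    show ?thesis
    proof (cases "Z = Y'")
      case True
      have "\<forall>x\<in>Z. x \<notin> Y" using False True disjP[OF Y Y'] by blast
      then show ?thesis using True \<beta>' unfolding tr_def bij_betw_def inj_on_def by simp
    next
      case False2: False
      have "\<forall>x\<in>Z. x \<notin> Y \<and> x \<notin> Y' \<and> x \<in> X" using False False2 disjP[OF Y Z] disjP[OF Y' Z] subP[OF Z] by blast
      then show ?thesis unfolding tr_def inj_on_def by simp
    qed
  qed
  show imgZ: "?t ` Z = img Z" if Z: "Z \<in> P" for Z
  proof (cases "Z = Y")
    case True then show ?thesis using \<beta> unfolding tr_def bij_betw_def img_def by simp
  next
    case False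
    show ?thesis
    proof (cases "Z = Y'")
      case True
      have "\<forall>x\<in>Z. x \<notin> Y" using False True disjP[OF Y Y'] by blast
      then have "?t ` Z = inv_into Y \<beta> ` Y'" using True unfolding tr_def by (auto simp: image_iff)
      then show ?thesis using True False \<beta>' unfolding img_def bij_betw_def by simp
    next
      case False2: False
      have "\<forall>x\<in>Z. x \<notin> Y \<and> x \<notin> Y' \<and> x \<in> X" using False False2 disjP[OF Y Z] disjP[OF Y' Z] subP[OF Z] by blast
      then have "?t ` Z = Z" unfolding tr_def by (auto simp: image_iff)
      then show ?thesis using False False2 unfolding img_def by simp
    qed
  qed
  have tblk: "?t x \<in> X \<and> blk (?t x) = img (blk x) \<and> ?t ` blk x = img (blk x)" if x: "x \<in> X" for x
  proof -
    have "?t ` blk x = img (blk x)" using imgZ blk_P x by blast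
    moreover have "?t x \<in> ?t ` blk x" using blk_mem x by blast
    ultimately show ?thesis using blk_eq imgP blk_P x subP by blast
  qed
  show "BP ?t" unfolding BP_def
  proof (intro conjI ballI)
    have "?t x \<in> X" if "x \<in> X" for x using tblk that by blast
    moreover have "?t x = undefined" if "x \<notin> X" for x using that subP[OF Y] subP[OF Y'] unfolding tr_def by auto
    ultimately show "?t \<in> X \<rightarrow>\<^sub>E X" by (auto simp: PiE_def Pi_def extensional_def)
    show "inj_on ?t X"
    proof
      fix x y assume xy: "x \<in> X" "y \<in> X" "?t x = ?t y"
      then have "img (blk x) = img (blk y)" using tblk by metis
      then have "blk x = blk y" using imgi blk_P xy by blast
      then show "x = y" using injZ[OF blk_P[OF xy(1)]] xy blk_mem unfolding inj_on_def by metis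
    qed
    fix x assume "x \<in> X" then show "?t ` blk x = blk (?t x)" using tblk by metis
  qed
qed

lemma ext_bij:
  assumes C: "finite C" and D: "finite D" and cd: "card C = card D" and S: "S \<subseteq> C" and Q: "Q \<subseteq> D"
    and so: "card S \<le> card Q"
  shows "\<exists>\<theta>. bij_betw \<theta> C D \<and> \<theta> ` S \<subseteq> Q"
proof -
  have fS: "finite S" "finite Q" using C D S Q finite_subset by blast+
  obtain j where j: "j ` S \<subseteq> Q" "inj_on j S" using card_le_inj[OF fS so] by blast
  have jD: "j ` S \<subseteq> D" using j Q by blast
  have "card (C - S) = card (D - j ` S)"
    using card_Diff_subset[OF fS(1) S] card_Diff_subset[OF finite_subset[OF jD D] jD] card_image[OF j(2)] cd by simp
  then obtain k where k: "bij_betw k (C - S) (D - j ` S)" using finite_same_card_bij C D by (metis finite_Diff)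
  define \<theta> where "\<theta> x = (if x \<in> S then j x else k x)" for x
  have b1: "bij_betw \<theta> S (j ` S)" using j(2) unfolding \<theta>_def bij_betw_def inj_on_def by auto
  have b2: "bij_betw \<theta> (C - S) (D - j ` S)" using k unfolding \<theta>_def by (rule bij_betw_cong[THEN iffD1, rotated]) auto
  have "bij_betw \<theta> (S \<union> (C - S)) (j ` S \<union> (D - j ` S))" by (rule bij_betw_combine[OF b1 b2]) blast
  moreover have "S \<union> (C - S) = C" "j ` S \<union> (D - j ` S) = D" using S jD by blast+
  ultimately have "bij_betw \<theta> C D" by simp
  moreover have "\<theta> ` S \<subseteq> Q" using j unfolding \<theta>_def by auto
  ultimately show ?thesis by blast
qed

end

context pctx begin

lemma GM:
  assumes U: "U \<in> P" and C: "C \<in> P" and UC: "U \<noteq> C" and \<phi>: "\<phi> ` U \<subseteq> C"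
    and h: "h \<in> TT" and hi: "Inj h"
    and hc: "\<And>x y. x\<in>X \<Longrightarrow> y\<in>X \<Longrightarrow> blk (h x) = blk (h y) \<longleftrightarrow> (blk x = blk y \<or> (blk x \<in> {U,C} \<and> blk y \<in> {U,C}))"
    and \<theta>: "inj_on \<theta> C" "\<theta> ` \<phi> ` U \<subseteq> h ` U" "\<theta> ` C \<subseteq> h ` C"
  shows "\<exists>\<sigma>\<in>SS. \<exists>R\<in>SS. mg U C \<phi> = compose X \<sigma> (compose X h R)"
proof -
  let ?f = "mg U C \<phi>"
  define R where "R x = (if x \<in> C then inv_into C h (\<theta> x) else if x \<in> U then inv_into U h (\<theta> (\<phi> x)) else if x \<in> X then x else undefined)" for x
  have UX: "U \<subseteq> X" and CX: "C \<subseteq> X" using subP U C by auto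
  have UCd: "x \<notin> U" if "x \<in> C" for x using that disjP[OF U C] UC by blast
  have inU: "x \<in> U \<longleftrightarrow> blk x = U" if "x \<in> X" for x using blk_eq[OF U] blk_mem[OF that] by metis
  have inC: "x \<in> C \<longleftrightarrow> blk x = C" if "x \<in> X" for x using blk_eq[OF C] blk_mem[OF that] by metis
  have Rp: "R x \<in> X \<and> blk (R x) = blk x \<and> h (R x) = (if x \<in> U \<union> C then \<theta> (?f x) else h x)" if x: "x \<in> X" for x
  proof (cases "x \<in> C")
    case True
    have "\<theta> x \<in> h ` C" using \<theta>(3) True by blast
    then have "inv_into C h (\<theta> x) \<in> C" "h (inv_into C h (\<theta> x)) = \<theta> x" by (auto intro: inv_into_into f_inv_into_f)
    moreover have "?f x = x" using UCd[OF True] x unfolding mg_def by simp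
    ultimately show ?thesis using True CX blk_eq[OF C] unfolding R_def by auto
  next
    case False
    show ?thesis
    proof (cases "x \<in> U")
      case True
      have "\<theta> (\<phi> x) \<in> h ` U" using \<theta>(2) True by blast
      then have "inv_into U h (\<theta> (\<phi> x)) \<in> U" "h (inv_into U h (\<theta> (\<phi> x))) = \<theta> (\<phi> x)" by (auto intro: inv_into_into f_inv_into_f)
      moreover have "?f x = \<phi> x" using True unfolding mg_def by simp
      ultimately show ?thesis using True False UX blk_eq[OF U] unfolding R_def by auto
    next
      case False2: False
      then show ?thesis using False x unfolding R_def by simp
    qed
  qed
  have Rext: "R x = undefined" if "x \<notin> X" for x using that UX CX unfolding R_def by auto
  have RT: "R \<in> TT" unfolding T_char
  proof
    show "R \<in> X \<rightarrow>\<^sub>E X" using Rp Rext by (auto simp: PiE_def Pi_def extensional_def)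
    show "\<forall>x\<in>X. \<forall>y\<in>X. blk x = blk y \<longrightarrow> blk (R x) = blk (R y)" using Rp by metis
  qed
  have "IB R = P"
  proof
    show "IB R \<subseteq> P" using IB_sub[OF RT] .
    show "P \<subseteq> IB R"
    proof
      fix B assume B: "B \<in> P"
      then have "blk (R (rep B)) = B" using Rp rep_X rep_blk by metis
      then show "B \<in> IB R" using rep_X[OF B] unfolding IB_def by (metis imageI)
    qed
  qed
  then have RS: "R \<in> SS" using S_char RT by blast
  let ?k = "compose X h R"
  have kT: "?k \<in> TT" using compose_T RT h by blast
  have kx: "?k x = h (R x)" if "x \<in> X" for x using that by (simp add: compose_def)
  have fT: "?f \<in> TT" using mg_T U C \<phi> by blast
  have fblk: "blk (?f x) = (if blk x = U then C else blk x)" if "x \<in> X" for x using mg_blk(2)[OF U C \<phi> that] .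
  have fC: "?f x \<in> C" if "x \<in> X" "x \<in> U \<union> C" for x using that \<phi> UCd unfolding mg_def by auto
  have hck: "blk (?k x) = blk (?k y) \<longleftrightarrow> (blk x = blk y \<or> (blk x \<in> {U,C} \<and> blk y \<in> {U,C}))" if "x \<in> X" "y \<in> X" for x y
    using hc[of "R x" "R y"] Rp that kx by metis
  have "\<exists>\<sigma>\<in>SS. ?f = compose X \<sigma> ?k"
  proof (rule left_factor[OF fT kT])
    fix x y assume xy: "x \<in> X" "y \<in> X" and e: "?k x = ?k y"
    then have c: "blk x = blk y \<or> (blk x \<in> {U,C} \<and> blk y \<in> {U,C})" using hck by metis
    show "?f x = ?f y"
    proof (cases "x \<in> U \<union> C")
      case True
      then have "blk x \<in> {U,C}" using inU inC xy by blast
      then have "y \<in> U \<union> C" using c inU inC xy by auto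
      then have "\<theta> (?f x) = \<theta> (?f y)" using e True Rp xy kx by metis
      then show ?thesis using \<theta>(1) fC True \<open>y \<in> U \<union> C\<close> xy unfolding inj_on_def by blast
    next
      case False
      then have "blk x \<notin> {U,C}" using inU inC xy by blast
      then have bxy: "blk x = blk y" using c by blast
      then have "y \<notin> U \<union> C" using False inU inC xy by auto
      then have "h x = h y" using e False Rp xy kx by metis
      then have "x = y" using hi bxy xy by (simp add: Inj_def)
      then show ?thesis by simp
    qed
  next
    fix x y assume xy: "x \<in> X" "y \<in> X"
    have gen: "(a = b \<or> (a \<in> {U,C} \<and> b \<in> {U,C})) \<longleftrightarrow> ((if a = U then C else a) = (if b = U then C else b))" for a b
      using UC by auto
    show "blk (?k x) = blk (?k y) \<longleftrightarrow> blk (?f x) = blk (?f y)"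
      unfolding hck[OF xy] fblk[OF xy(1)] fblk[OF xy(2)] by (rule gen)
  qed
  then show ?thesis using RS by blast
qed

end

context pctx begin

definition Types :: "nat set set" where
  "Types = {{card A, card B} | A B. A \<in> P \<and> B \<in> P \<and> A \<noteq> B}"

definition wpair :: "nat set \<Rightarrow> 'a set \<times> 'a set" where
  "wpair t = (SOME p. fst p \<in> P \<and> snd p \<in> P \<and> fst p \<noteq> snd p \<and> card (fst p) \<le> card (snd p) \<and> t = {card (fst p), card (snd p)})"

definition "wA t = fst (wpair t)"
definition "wB t = snd (wpair t)"

lemma wAB: assumes "t \<in> Types"
  shows "wA t \<in> P" "wB t \<in> P" "wA t \<noteq> wB t" "card (wA t) \<le> card (wB t)" "t = {card (wA t), card (wB t)}"
proof -
  obtain A B where AB: "A \<in> P" "B \<in> P" "A \<noteq> B" "t = {card A, card B}" using assms unfolding Types_def by blast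
  have "\<exists>p. fst p \<in> P \<and> snd p \<in> P \<and> fst p \<noteq> snd p \<and> card (fst p) \<le> card (snd p) \<and> t = {card (fst p), card (snd p)}"
  proof (cases "card A \<le> card B")
    case True then show ?thesis using AB by (intro exI[of _ "(A,B)"]) auto
  next
    case False then show ?thesis using AB by (intro exI[of _ "(B,A)"]) (auto simp: insert_commute)
  qed
  from someI_ex[OF this] show "wA t \<in> P" "wB t \<in> P" "wA t \<noteq> wB t" "card (wA t) \<le> card (wB t)" "t = {card (wA t), card (wB t)}"
    unfolding wA_def wB_def wpair_def by blast+
qed

definition "w\<iota> t = (SOME \<iota>. inj_on \<iota> (wA t) \<and> \<iota> ` wA t \<subseteq> wB t)"

lemma w\<iota>: assumes "t \<in> Types" shows "inj_on (w\<iota> t) (wA t)" "w\<iota> t ` wA t \<subseteq> wB t"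
proof -
  have "\<exists>\<iota>. inj_on \<iota> (wA t) \<and> \<iota> ` wA t \<subseteq> wB t" using card_le_inj finB wAB[OF assms] by metis
  from someI_ex[OF this] show "inj_on (w\<iota> t) (wA t)" "w\<iota> t ` wA t \<subseteq> wB t" unfolding w\<iota>_def by blast+
qed

definition "wit t = mg (wA t) (wB t) (w\<iota> t)"

lemma wit_T: "t \<in> Types \<Longrightarrow> wit t \<in> TT" unfolding wit_def using mg_T wAB w\<iota> by blast

lemma wit_types: "t \<in> Types \<Longrightarrow> types (wit t) = {t}" "t \<in> Types \<Longrightarrow> Inj (wit t)"
  unfolding wit_def using wit_props wAB w\<iota> by metis+

lemma getR:
  assumes U': "U' \<in> P" and C': "C' \<in> P" and UC': "U' \<noteq> C'" and A: "A \<in> P" and B: "B \<in> P" and AB: "A \<noteq> B"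
    and cU: "card U' = card A" and cC: "card C' = card B"
  shows "\<exists>R. BP R \<and> R ` U' = A \<and> R ` C' = B"
proof -
  obtain \<beta>1 where \<beta>1: "bij_betw \<beta>1 U' A" using finite_same_card_bij finB U' A cU by metis
  let ?t1 = "tr U' A \<beta>1"
  have t1: "BP ?t1" using tr_props(1)[OF U' A \<beta>1] .
  have t1U: "?t1 ` U' = A" using tr_props(2)[OF U' A \<beta>1 U'] by simp
  define C1 where "C1 = ?t1 ` C'"
  have C1: "C1 \<in> P" "card C1 = card B" using BP_img[OF t1 C'] cC unfolding C1_def by auto
  have AC1: "A \<noteq> C1" using BP_img_inj[OF t1 U' C'] UC' t1U unfolding C1_def by metis
  obtain \<beta>2 where \<beta>2: "bij_betw \<beta>2 C1 B" using finite_same_card_bij finB C1 B by metis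
  let ?t2 = "tr C1 B \<beta>2"
  have t2: "BP ?t2" using tr_props(1)[OF C1(1) B \<beta>2] .
  have t2A: "?t2 ` A = A" using tr_props(2)[OF C1(1) B \<beta>2 A] AC1 AB by simp
  have t2C: "?t2 ` C1 = B" using tr_props(2)[OF C1(1) B \<beta>2 C1(1)] by simp
  let ?R = "compose X ?t2 ?t1"
  have "?R ` U' = A" by (simp only: compose_img[OF subP[OF U']] t1U t2A)
  moreover have c1: "?t1 ` C' = C1" unfolding C1_def ..
  moreover have "?R ` C' = B" by (simp only: compose_img[OF subP[OF C']] c1 t2C)
  moreover have "BP ?R" using BP_compose[OF t1 t2] .
  ultimately show ?thesis by blast
qed

lemma nat_pair: "{a, b} = {u, c} \<Longrightarrow> (a::nat) \<le> b \<Longrightarrow> u \<le> c \<Longrightarrow> a = u \<and> b = c"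
  by (auto simp: doubleton_eq_iff)

lemma merge_gen:
  assumes U: "U \<in> P" and C: "C \<in> P" and UC: "U \<noteq> C" and \<phi>: "\<phi> ` U \<subseteq> C"
    and SG: "SS \<subseteq> G" and WG: "wit ` Types \<subseteq> G"
    and cl: "\<And>f g. f \<in> G \<Longrightarrow> g \<in> G \<Longrightarrow> compose X g f \<in> G"
  shows "mg U C \<phi> \<in> G"
proof -
  define t where "t = {card U, card C}"
  have tT: "t \<in> Types" unfolding t_def Types_def using U C UC by blast
  define A where "A = wA t"
  define B where "B = wB t"
  define \<iota> where "\<iota> = w\<iota> t"
  note ab = wAB[OF tT, folded A_def B_def]
  note io = w\<iota>[OF tT, folded A_def B_def \<iota>_def]
  let ?e = "mg A B \<iota>"
  have eG: "?e \<in> G" using WG tT unfolding wit_def A_def B_def \<iota>_def by blast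
  have eT: "?e \<in> TT" using mg_T ab io by blast
  have ei: "Inj ?e" using wit_props ab io by blast
  have main: "mg U C \<phi> \<in> G" if U': "U' \<in> P" and C': "C' \<in> P" and UC': "U' \<noteq> C'"
    and cU: "card U' = card A" and cC: "card C' = card B" and UCset: "{U',C'} = {U,C}"
    and thx: "\<And>Q. Q = mg A B \<iota> \<Longrightarrow> \<exists>\<theta>. inj_on \<theta> C \<and> \<theta> ` \<phi> ` U \<subseteq> (compose X Q R0) ` U \<and> \<theta> ` C \<subseteq> (compose X Q R0) ` C"
    and R0: "BP R0" "R0 ` U' = A" "R0 ` C' = B" for U' C' R0
  proof -
    let ?h = "compose X ?e R0"
    have R0T: "R0 \<in> TT" using BP_T R0(1) by blast
    have hG: "?h \<in> G" using cl[OF _ eG] SG BP_S[OF R0(1)] by blast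
    have hT: "?h \<in> TT" using compose_T[OF R0T eT] .
    have hx: "?h x = ?e (R0 x)" if "x \<in> X" for x using that by (simp add: compose_def)
    have R0b: "R0 x \<in> X \<and> blk (R0 x) = R0 ` blk x" if "x \<in> X" for x using BP_D(3,4)[OF R0(1) that] by simp
    have hi: "Inj ?h" unfolding Inj_def
    proof (intro ballI impI)
      fix x y assume xy: "x \<in> X" "y \<in> X" "blk x = blk y" "?h x = ?h y"
      have "blk (R0 x) = blk (R0 y)" using R0b xy by metis
      then have "R0 x = R0 y" using ei R0b xy hx unfolding Inj_def by metis
      then show "x = y" using BP_D(2)[OF R0(1)] xy unfolding inj_on_def by blast
    qed
    have gen: "(a = b \<or> (a \<in> {A,B} \<and> b \<in> {A,B})) \<longleftrightarrow> ((if a = A then B else a) = (if b = A then B else b))" for a b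
      using ab(3) by auto
    have hc: "blk (?h x) = blk (?h y) \<longleftrightarrow> (blk x = blk y \<or> (blk x \<in> {U,C} \<and> blk y \<in> {U,C}))" if xy: "x \<in> X" "y \<in> X" for x y
    proof -
      have e1: "blk (?h x) = (if R0 ` blk x = A then B else R0 ` blk x)" using hx mg_blk(2)[OF ab(1,2) io(2)] R0b xy by metis
      have e2: "blk (?h y) = (if R0 ` blk y = A then B else R0 ` blk y)" using hx mg_blk(2)[OF ab(1,2) io(2)] R0b xy by metis
      have i1: "R0 ` blk x = R0 ` blk y \<longleftrightarrow> blk x = blk y" using BP_img_inj[OF R0(1)] blk_P xy by metis
      have i2: "R0 ` E \<in> {A,B} \<longleftrightarrow> E \<in> {U,C}" if "E \<in> P" for E
      proof -
        have "R0 ` E \<in> {A,B} \<longleftrightarrow> E \<in> {U',C'}"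
          using BP_img_inj[OF R0(1) that U'] BP_img_inj[OF R0(1) that C'] R0(2,3) by blast
        then show ?thesis using UCset by simp
      qed
      show ?thesis unfolding e1 e2 gen[symmetric] i1 using i2 blk_P xy by metis
    qed
    obtain \<theta> where th: "inj_on \<theta> C" "\<theta> ` \<phi> ` U \<subseteq> ?h ` U" "\<theta> ` C \<subseteq> ?h ` C" using thx[OF refl] by blast
    obtain \<sigma> R where sr: "\<sigma> \<in> SS" "R \<in> SS" "mg U C \<phi> = compose X \<sigma> (compose X ?h R)"
      using GM[OF U C UC \<phi> hT hi hc th] by blast
    have "R \<in> G" "\<sigma> \<in> G" using sr SG by auto
    then have "compose X \<sigma> (compose X ?h R) \<in> G" using cl hG by blast
    then show ?thesis using sr(3) by simp
  qed
  have eB: "?e ` B = B" using ab(3) disjP[OF ab(1,2)] subP[OF ab(2)] unfolding mg_def by (auto simp: image_iff)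
  have eA: "?e ` A = \<iota> ` A" unfolding mg_def by simp
  show ?thesis
  proof (cases "card U \<le> card C")
    case True
    have "{card A, card B} = {card U, card C}" using ab(5) t_def by simp
    then have cs: "card A = card U" "card B = card C" using nat_pair[OF _ ab(4) True] by auto
    obtain R0 where R0: "BP R0" "R0 ` U = A" "R0 ` C = B" using getR[OF U C UC ab(1,2,3)] cs by metis
    show ?thesis
    proof (rule main[OF U C UC cs(1)[symmetric] cs(2)[symmetric] refl _ R0])
      fix Q assume Q: "Q = mg A B \<iota>"
      have hU: "compose X Q R0 ` U = \<iota> ` A" unfolding Q by (simp only: compose_img[OF subP[OF U]] R0(2) eA)
      have hC: "compose X Q R0 ` C = B" unfolding Q by (simp only: compose_img[OF subP[OF C]] R0(3) eB)
      have cle: "card (\<phi> ` U) \<le> card (\<iota> ` A)" using card_image_le[OF finB[OF U]] card_image[OF io(1)] cs by simp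
      obtain \<theta> where th: "bij_betw \<theta> C B" "\<theta> ` \<phi> ` U \<subseteq> \<iota> ` A"
        using ext_bij[OF finB[OF C] finB[OF ab(2)] cs(2)[symmetric] \<phi> io(2) cle] by blast
      have "inj_on \<theta> C" "\<theta> ` C = B" using th(1) unfolding bij_betw_def by auto
      then show "\<exists>\<theta>. inj_on \<theta> C \<and> \<theta> ` \<phi> ` U \<subseteq> compose X Q R0 ` U \<and> \<theta> ` C \<subseteq> compose X Q R0 ` C"
        unfolding hU hC using th(2) by blast
    qed
  next
    case False
    have "{card A, card B} = {card C, card U}" using ab(5) t_def by (simp add: insert_commute)
    then have cs: "card A = card C" "card B = card U"
      using nat_pair[OF _ ab(4), of "card C" "card U"] False by auto
    obtain R0 where R0: "BP R0" "R0 ` C = A" "R0 ` U = B" using getR[OF C U UC[symmetric] ab(1,2,3)] cs by metis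
    show ?thesis
    proof (rule main[OF C U UC[symmetric] cs(1)[symmetric] cs(2)[symmetric] insert_commute _ R0])
      fix Q assume Q: "Q = mg A B \<iota>"
      have hC: "compose X Q R0 ` C = \<iota> ` A" unfolding Q by (simp only: compose_img[OF subP[OF C]] R0(2) eA)
      have hU: "compose X Q R0 ` U = B" unfolding Q by (simp only: compose_img[OF subP[OF U]] R0(3) eB)
      have "card C = card (\<iota> ` A)" using card_image[OF io(1)] cs by simp
      then obtain \<theta> where th: "bij_betw \<theta> C (\<iota> ` A)"
        using finite_same_card_bij finB[OF C] finite_imageI[OF finB[OF ab(1)]] by metis
      have th2: "inj_on \<theta> C" "\<theta> ` C = \<iota> ` A" using th unfolding bij_betw_def by auto
      then have "\<theta> ` \<phi> ` U \<subseteq> B" using \<phi> io(2) by (metis image_mono subset_trans)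
      then show "\<exists>\<theta>. inj_on \<theta> C \<and> \<theta> ` \<phi> ` U \<subseteq> compose X Q R0 ` U \<and> \<theta> ` C \<subseteq> compose X Q R0 ` C"
        unfolding hU hC using th2 by blast
    qed
  qed
qed

end

context pctx begin

lemma funpow_img_Suc: "(\<phi> ^^ Suc j) ` P = \<phi> ` ((\<phi> ^^ j) ` P)"
  by (simp add: image_comp)

lemma stab_lemma:
  fixes \<phi> :: "'a set \<Rightarrow> 'a set"
  assumes phiP: "\<And>E. E \<in> P \<Longrightarrow> \<phi> E \<in> P"
  defines "k \<equiv> card P"
  shows "\<phi> ` ((\<phi> ^^ k) ` P) = (\<phi> ^^ k) ` P" and "\<And>j. j \<ge> 1 \<Longrightarrow> (\<phi> ^^ j) ` P \<subseteq> \<phi> ` P"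
proof -
  let ?A = "\<lambda>j. (\<phi> ^^ j) ` P"
  have dec: "?A (Suc j) \<subseteq> ?A j" for j
  proof (induction j)
    case 0 then show ?case using phiP by auto
  next
    case (Suc j)
    have "?A (Suc (Suc j)) = \<phi> ` ?A (Suc j)" by (simp only: funpow.simps(2) image_comp)
    also have "\<dots> \<subseteq> \<phi> ` ?A j" using Suc.IH by (rule image_mono)
    also have "\<dots> = ?A (Suc j)" by (simp only: funpow.simps(2) image_comp)
    finally show ?case .
  qed
  have dec1: "?A (j + m) \<subseteq> ?A j" for j m
  proof (induction m)
    case 0 then show ?case by simp
  next
    case (Suc m) then show ?case using dec[of "j + m"] by simp
  qed
  show "j \<ge> 1 \<Longrightarrow> ?A j \<subseteq> \<phi> ` P" for j
    using dec1[of 1 "j - 1"] by simp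
  have stab: "?A (j + m) = ?A j" if "?A (Suc j) = ?A j" for j m
  proof (induction m)
    case 0 then show ?case by simp
  next
    case (Suc m)
    have "?A (j + Suc m) = \<phi> ` ?A (j + m)" using funpow_img_Suc[of "j + m" \<phi>] by simp
    also have "\<dots> = \<phi> ` ?A j" using Suc by simp
    also have "\<dots> = ?A j" using that funpow_img_Suc[of j \<phi>] by simp
    finally show ?case .
  qed
  have fin: "finite (?A j)" for j using finP by (rule finite_imageI)
  have "?A (Suc k) = ?A k"
  proof (rule ccontr)
    assume ne: "?A (Suc k) \<noteq> ?A k"
    have neq: "?A (Suc j) \<noteq> ?A j" if "j \<le> k" for j
    proof
      assume a: "?A (Suc j) = ?A j"
      have e1: "?A (j + (k - j)) = ?A j" by (rule stab[OF a])
      have e2: "?A (j + (Suc k - j)) = ?A j" by (rule stab[OF a])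
      have "j + (k - j) = k" "j + (Suc k - j) = Suc k" using that by auto
      then have "?A k = ?A j" "?A (Suc k) = ?A j" using e1 e2 by metis+
      then show False using ne by simp
    qed
    have "card (?A j) + j \<le> k" if "j \<le> Suc k" for j
      using that
    proof (induction j)
      case 0 then show ?case unfolding k_def by simp
    next
      case (Suc j)
      have "?A (Suc j) \<subseteq> ?A j" by (rule dec)
      moreover have "?A (Suc j) \<noteq> ?A j" using neq Suc.prems by simp
      ultimately have "?A (Suc j) \<subset> ?A j" by blast
      then have "card (?A (Suc j)) < card (?A j)" by (rule psubset_card_mono[OF fin])
      then show ?case using Suc.IH Suc.prems by simp
    qed
    from this[of "Suc k"] show False by simp
  qed
  then show "\<phi> ` ?A k = ?A k" using funpow_img_Suc[of k \<phi>] by simp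
qed

lemma all_gen:
  assumes SG: "SS \<subseteq> G"
    and MG: "\<And>U C \<phi>. U \<in> P \<Longrightarrow> C \<in> P \<Longrightarrow> U \<noteq> C \<Longrightarrow> \<phi> ` U \<subseteq> C \<Longrightarrow> mg U C \<phi> \<in> G"
    and cl: "\<And>f g. f \<in> G \<Longrightarrow> g \<in> G \<Longrightarrow> compose X g f \<in> G"
  shows "f \<in> TT \<Longrightarrow> f \<in> G"
proof (induction "card (P - IB f)" arbitrary: f rule: less_induct)
  case less
  note fT = less.prems
  show ?case
  proof (cases "IB f = P")
    case True then show ?thesis using S_char fT SG by blast
  next
    case False
    define \<phi> where "\<phi> = bm f"
    have phiP: "\<And>E. E \<in> P \<Longrightarrow> \<phi> E \<in> P" unfolding \<phi>_def using bmP[OF fT] .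
    have IBf: "IB f = \<phi> ` P" unfolding \<phi>_def using IB_bm[OF fT] .
    have phix: "blk (f x) = \<phi> (blk x)" if "x \<in> X" for x unfolding \<phi>_def using bm_eq[OF fT that] by simp
    define k where "k = card P"
    define Z where "Z = (\<phi> ^^ k) ` P"
    have phiZ: "\<phi> ` Z = Z" unfolding Z_def k_def using stab_lemma(1)[OF phiP] .
    have ZP: "Z \<subseteq> P"
    proof -
      have "(\<phi> ^^ j) ` P \<subseteq> P" for j by (induction j) (use phiP funpow_img_Suc in auto)
      then show ?thesis unfolding Z_def by blast
    qed
    obtain Dn where Dn: "Dn \<in> P" "Dn \<notin> \<phi> ` P" using False IBf IB_sub[OF fT] by blast
    have k1: "k \<ge> 1" unfolding k_def using Dn finP by (metis One_nat_def Suc_leI card_gt_0_iff empty_iff)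
    have Zsub: "Z \<subseteq> \<phi> ` P" unfolding Z_def using stab_lemma(2)[OF phiP k1] by (simp add: k_def)
    have "\<exists>U\<in>P - Z. \<phi> U \<in> Z"
    proof (rule ccontr)
      assume "\<not> (\<exists>U\<in>P - Z. \<phi> U \<in> Z)"
      then have h: "\<And>U. U \<in> P - Z \<Longrightarrow> \<phi> U \<in> P - Z" using phiP by blast
      have D0: "Dn \<in> P - Z" using Dn Zsub by blast
      have "(\<phi> ^^ j) Dn \<in> P - Z" for j by (induction j) (use D0 h in auto)
      moreover have "(\<phi> ^^ k) Dn \<in> Z" unfolding Z_def using Dn by blast
      ultimately show False by blast
    qed
    then obtain U where U: "U \<in> P" "U \<notin> Z" "\<phi> U \<in> Z" by blast
    define c where "c = \<phi> U"
    have cP: "c \<in> P" "c \<in> Z" "c \<noteq> U" using U ZP unfolding c_def by auto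
    define \<tau> where "\<tau> x = (if x \<in> X then (if blk x \<in> Z then f x else (SOME y. y \<in> blk x \<and> f y = f x)) else undefined)" for x
    have \<tau>p: "\<tau> x \<in> X \<and> (blk x \<notin> Z \<longrightarrow> f (\<tau> x) = f x) \<and> blk (\<tau> x) = (if blk x \<in> Z then \<phi> (blk x) else blk x) \<and> (blk x \<in> Z \<longrightarrow> \<tau> x = f x)" if x: "x \<in> X" for x
    proof (cases "blk x \<in> Z")
      case True
      have "\<tau> x = f x" using x True unfolding \<tau>_def by simp
      then show ?thesis using x phix[OF x] TX[OF fT x] True by simp
    next
      case False
      have "\<exists>y. y \<in> blk x \<and> f y = f x" using blk_mem x by blast
      then have "(SOME y. y \<in> blk x \<and> f y = f x) \<in> blk x \<and> f (SOME y. y \<in> blk x \<and> f y = f x) = f x" by (rule someI_ex)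
      moreover have "\<tau> x = (SOME y. y \<in> blk x \<and> f y = f x)" using x False unfolding \<tau>_def by simp
      ultimately show ?thesis using False blk_X[OF x] blk_same[OF x] by (metis subsetD)
    qed
    have \<tau>ext: "\<tau> x = undefined" if "x \<notin> X" for x using that unfolding \<tau>_def by simp
    have \<tau>T: "\<tau> \<in> TT" unfolding T_char
    proof
      show "\<tau> \<in> X \<rightarrow>\<^sub>E X" using \<tau>p \<tau>ext by (auto simp: PiE_def Pi_def extensional_def)
      show "\<forall>x\<in>X. \<forall>y\<in>X. blk x = blk y \<longrightarrow> blk (\<tau> x) = blk (\<tau> y)" using \<tau>p by metis
    qed
    have "IB \<tau> = P"
    proof
      show "IB \<tau> \<subseteq> P" using IB_sub[OF \<tau>T] .
      show "P \<subseteq> IB \<tau>"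
      proof
        fix B assume B: "B \<in> P"
        show "B \<in> IB \<tau>"
        proof (cases "B \<in> Z")
          case True
          then obtain E where E: "E \<in> Z" "B = \<phi> E" using phiZ by (metis imageE)
          have EP: "E \<in> P" using E ZP by blast
          have "blk (\<tau> (rep E)) = B" using \<tau>p[OF rep_X[OF EP]] rep_blk[OF EP] E by metis
          then show ?thesis using rep_X[OF EP] unfolding IB_def by (metis imageI)
        next
          case False
          have "blk (\<tau> (rep B)) = B" using \<tau>p[OF rep_X[OF B]] rep_blk[OF B] False by simp
          then show ?thesis using rep_X[OF B] unfolding IB_def by (metis imageI)
        qed
      qed
    qed
    then have \<tau>S: "\<tau> \<in> SS" using S_char \<tau>T by blast
    have fU: "f ` U \<subseteq> c"
    proof
      fix z assume "z \<in> f ` U" then obtain x where x: "x \<in> U" "z = f x" by blast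
      then have xX: "x \<in> X" "blk x = U" using subP[OF U(1)] blk_eq[OF U(1)] by auto
      then have "blk (f x) = c" using phix c_def by simp
      then show "z \<in> c" using x blk_mem TX[OF fT xX(1)] by metis
    qed
    let ?e = "mg U c f"
    have eG: "?e \<in> G" using MG[OF U(1) cP(1) cP(3)[symmetric] fU] .
    let ?m = "compose X ?e \<tau>"
    have mG: "?m \<in> G" using cl[OF _ eG] \<tau>S SG by blast
    have inU: "x \<in> U \<longleftrightarrow> blk x = U" if "x \<in> X" for x using blk_eq[OF U(1)] blk_mem[OF that] by metis
    have mx: "?m x = (if blk x \<in> Z \<or> blk x = U then f x else \<tau> x) \<and> blk (?m x) = (if blk x \<in> Z then \<phi> (blk x) else if blk x = U then c else blk x)" if x: "x \<in> X" for x
    proof -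
      have m1: "?m x = ?e (\<tau> x)" using x by (simp add: compose_def)
      note tp = \<tau>p[OF x]
      show ?thesis
      proof (cases "blk x \<in> Z")
        case True
        then have "blk (\<tau> x) \<in> Z" using tp phiZ by auto
        then have "\<tau> x \<notin> U" using inU tp U(2) by metis
        then have "?m x = f x" using m1 tp True TX[OF fT x] unfolding mg_def by simp
        then show ?thesis using True phix[OF x] by simp
      next
        case False
        show ?thesis
        proof (cases "blk x = U")
          case True
          then have "\<tau> x \<in> U" using inU tp False by metis
          then have "?m x = f x" using m1 tp False unfolding mg_def by simp
          then show ?thesis using True False phix[OF x] c_def by simp
        next
          case False2: False
          then have "\<tau> x \<notin> U" using inU tp False by metis
          then have "?m x = \<tau> x" using m1 tp False unfolding mg_def by simp
          then show ?thesis using False False2 tp by simp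
        qed
      qed
    qed
    define g where "g z = (if z \<in> X then (if blk z \<in> Z then z else if blk z = U then rep Dn else f z) else undefined)" for z
    define \<psi> where "\<psi> E = (if E \<in> Z then E else if E = U then Dn else \<phi> E)" for E
    have gp: "g z \<in> X \<and> blk (g z) = \<psi> (blk z)" if z: "z \<in> X" for z
      using z rep_X[OF Dn(1)] rep_blk[OF Dn(1)] phix[OF z] TX[OF fT z] unfolding g_def \<psi>_def by auto
    have gT: "g \<in> TT" unfolding T_char
    proof
      show "g \<in> X \<rightarrow>\<^sub>E X" using gp unfolding g_def by (auto simp: PiE_def Pi_def extensional_def)
      show "\<forall>x\<in>X. \<forall>y\<in>X. blk x = blk y \<longrightarrow> blk (g x) = blk (g y)" using gp by metis
    qed
    have fcomp: "f = compose X g ?m"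
    proof
      fix x show "f x = compose X g ?m x"
      proof (cases "x \<in> X")
        case False then show ?thesis using Text[OF fT False] by (simp add: compose_def)
      next
        case True
        note mm = mx[OF True]
        note tp = \<tau>p[OF True]
        have gm: "g (?m x) = f x"
        proof (cases "blk x \<in> Z \<or> blk x = U")
          case True2: True
          then have "?m x = f x" using mm by simp
          moreover have "blk (f x) \<in> Z" using True2 phix[OF True] phiZ U(3) by auto
          ultimately show ?thesis using TX[OF fT True] unfolding g_def by simp
        next
          case False
          then have "?m x = \<tau> x" "blk (\<tau> x) = blk x" using mm tp by auto
          then show ?thesis using False tp unfolding g_def by simp
        qed
        then show ?thesis using True by (simp add: compose_def)
      qed
    qed
    have IBg: "IB g = \<psi> ` P"
    proof -
      have "IB g = (\<lambda>z. \<psi> (blk z)) ` X" unfolding IB_def using gp by (auto simp: image_image)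
      also have "\<dots> = \<psi> ` P" by (metis P_eq image_image)
      finally show ?thesis .
    qed
    have "\<psi> ` P = \<phi> ` P \<union> {Dn}"
    proof
      show "\<psi> ` P \<subseteq> \<phi> ` P \<union> {Dn}" unfolding \<psi>_def using Zsub by auto
      show "\<phi> ` P \<union> {Dn} \<subseteq> \<psi> ` P"
      proof
        fix B assume "B \<in> \<phi> ` P \<union> {Dn}"
        then consider "B = Dn" | E where "E \<in> P" "B = \<phi> E" by (metis UnE imageE singletonD)
        then show "B \<in> \<psi> ` P"
        proof cases
          case 1
          have "\<psi> U = Dn" using U(2) unfolding \<psi>_def by simp
          then show ?thesis using U(1) 1 by (metis imageI)
        next
          case (2 E)
          show ?thesis
          proof (cases "E \<in> Z \<or> E = U")
            case True
            then have "B \<in> Z" using 2 phiZ U(3) by auto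
            then have "\<psi> B = B" unfolding \<psi>_def by simp
            then show ?thesis using \<open>B \<in> Z\<close> ZP by (metis imageI subsetD)
          next
            case False
            then have "\<psi> E = B" using 2 unfolding \<psi>_def by simp
            then show ?thesis using 2 by (metis imageI)
          qed
        qed
      qed
    qed
    then have "P - IB g = (P - IB f) - {Dn}" using IBg IBf by auto
    moreover have "Dn \<in> P - IB f" using Dn IBf by simp
    ultimately have "card (P - IB g) < card (P - IB f)"
      using finP by (metis card_Diff1_less finite_Diff)
    then have "g \<in> G" using less.hyps gT by blast
    then have "compose X g ?m \<in> G" by (rule cl[OF mG])
    then show ?thesis using fcomp by (metis (no_types))
  qed
qed

end

context pctx begin

lemma gen_full: "sgen X (SS \<union> wit ` Types) = TT"
proof
  have sub: "SS \<union> wit ` Types \<subseteq> TT" using S_T wit_T by blast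
  show "sgen X (SS \<union> wit ` Types) \<subseteq> TT" using sgen_T[OF _ sub] by blast
  let ?G = "sgen X (SS \<union> wit ` Types)"
  have SG: "SS \<subseteq> ?G" by (auto intro: sgen.base)
  have WG: "wit ` Types \<subseteq> ?G" by (auto intro: sgen.base)
  have cl: "\<And>f g. f \<in> ?G \<Longrightarrow> g \<in> ?G \<Longrightarrow> compose X g f \<in> ?G" by (rule sgen.comp)
  have MG: "\<And>U C \<phi>. U \<in> P \<Longrightarrow> C \<in> P \<Longrightarrow> U \<noteq> C \<Longrightarrow> \<phi> ` U \<subseteq> C \<Longrightarrow> mg U C \<phi> \<in> ?G"
    using merge_gen[OF _ _ _ _ SG WG cl] by blast
  show "TT \<subseteq> ?G" using all_gen[OF SG MG cl] by blast
qed

lemma finTT: "finite TT"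
proof -
  have f: "finite (X \<rightarrow>\<^sub>E X)" by (intro finite_PiE finX)
  have "TT \<subseteq> X \<rightarrow>\<^sub>E X" unfolding T_part_def by (rule Collect_restrict)
  then show ?thesis using f by (rule finite_subset)
qed

lemma card_W: "card (wit ` Types) = card Types"
proof -
  have "inj_on wit Types"
  proof
    fix s t assume "s \<in> Types" "t \<in> Types" "wit s = wit t"
    then show "s = t" using wit_types(1) by (metis singleton_inject)
  qed
  then show ?thesis by (rule card_image)
qed

lemma lower: assumes W: "W \<subseteq> TT" "finite W" and gen: "sgen X (SS \<union> W) = TT"
  shows "card Types \<le> card W"
proof -
  have ex: "\<exists>w\<in>W. types w = {t}" if t: "t \<in> Types" for t
  proof -
    have "wit t \<in> sgen X (SS \<union> W)" using gen wit_T[OF t] by simp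
    then show ?thesis using lower_key[OF _ W(1)] wit_types[OF t] by blast
  qed
  define ch where "ch t = (SOME w. w \<in> W \<and> types w = {t})" for t
  have ch: "ch t \<in> W \<and> types (ch t) = {t}" if "t \<in> Types" for t
    using someI_ex[OF ex[OF that, unfolded Bex_def]] unfolding ch_def .
  have "inj_on ch Types"
  proof
    fix s t assume "s \<in> Types" "t \<in> Types" "ch s = ch t"
    then show "s = t" using ch by (metis singleton_inject)
  qed
  moreover have "ch ` Types \<subseteq> W" using ch by blast
  ultimately show ?thesis using card_inj_on_le W(2) by blast
qed

lemma relrank_Types: "relrank X TT SS = card Types"
  unfolding relrank_def
proof (rule Least_equality)
  have "wit ` Types \<subseteq> TT" using wit_T by blast
  moreover then have "finite (wit ` Types)" using finTT finite_subset by blast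
  ultimately show "\<exists>W. W \<subseteq> TT \<and> finite W \<and> card W = card Types \<and> sgen X (SS \<union> W) = TT"
    using card_W gen_full by blast
next
  fix n assume "\<exists>W. W \<subseteq> TT \<and> finite W \<and> card W = n \<and> sgen X (SS \<union> W) = TT"
  then show "card Types \<le> n" using lower by blast
qed

lemma card_Types: "card Types = (card (card ` P) choose 2)
   + card {m. \<exists>B1\<in>P. \<exists>B2\<in>P. B1 \<noteq> B2 \<and> card B1 = m \<and> card B2 = m}"
proof -
  let ?R = "{m. \<exists>B1\<in>P. \<exists>B2\<in>P. B1 \<noteq> B2 \<and> card B1 = m \<and> card B2 = m}"
  let ?T2 = "{S. S \<subseteq> card ` P \<and> card S = 2}"
  let ?T1 = "(\<lambda>m. {m}) ` ?R"
  have eq: "Types = ?T2 \<union> ?T1"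
  proof
    show "Types \<subseteq> ?T2 \<union> ?T1"
    proof
      fix t assume tT: "t \<in> Types"
      obtain A B where AB: "A \<in> P" "B \<in> P" "A \<noteq> B" "t = {card A, card B}"
        using tT[unfolded Types_def mem_Collect_eq] by blast
      show "t \<in> ?T2 \<union> ?T1"
      proof (cases "card A = card B")
        case True
        then have cR: "card A \<in> ?R" using AB(1,2,3) by (metis (mono_tags, lifting) mem_Collect_eq)
        have te: "t = {card A}" using AB(4) True by simp
        have "{card A} \<in> ?T1" using cR by (rule imageI)
        then have "t \<in> ?T1" unfolding te .
        then show ?thesis by (rule UnI2)
      next
        case False
        then have "t \<subseteq> card ` P" "card t = 2" using AB by auto
        then have "t \<in> ?T2" by simp
        then show ?thesis by (rule UnI1)
      qed
    qed
    show "?T2 \<union> ?T1 \<subseteq> Types"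
    proof
      fix t assume "t \<in> ?T2 \<union> ?T1"
      then consider "t \<in> ?T2" | "t \<in> ?T1" by blast
      then show "t \<in> Types"
      proof cases
        case 1
        then obtain a b where ab: "t = {a, b}" "a \<noteq> b" "a \<in> card ` P" "b \<in> card ` P" by (auto simp: card_2_iff)
        then obtain A B where "A \<in> P" "B \<in> P" "a = card A" "b = card B" by blast
        then show ?thesis using ab unfolding Types_def by blast
      next
        case 2
        then obtain m B1 B2 where "t = {m}" "B1 \<in> P" "B2 \<in> P" "B1 \<noteq> B2" "card B1 = m" "card B2 = m" by blast
        then show ?thesis unfolding Types_def by blast
      qed
    qed
  qed
  have "?R \<subseteq> card ` P"
  proof
    fix m assume "m \<in> ?R"
    then obtain B1 where "B1 \<in> P" "card B1 = m" by blast
    then show "m \<in> card ` P" by (metis imageI)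
  qed
  then have fR: "finite ?R" by (rule finite_subset) (rule finite_imageI[OF finP])
  have dis: "?T2 \<inter> ?T1 = {}"
  proof (rule equals0I)
    fix S assume "S \<in> ?T2 \<inter> ?T1"
    then obtain m where "S = {m}" "card S = 2" by blast
    then show False by simp
  qed
  have f2: "finite ?T2"
  proof (rule finite_subset)
    show "?T2 \<subseteq> Pow (card ` P)" by blast
    show "finite (Pow (card ` P))" using finP by simp
  qed
  have f1: "finite ?T1" using fR by (rule finite_imageI)
  have "card ?T2 = card (card ` P) choose 2" using n_subsets finP by blast
  moreover have "card ?T1 = card ?R" by (rule card_image) (auto simp: inj_on_def)
  ultimately show ?thesis using eq card_Un_disjoint[OF f2 f1 dis] by simp
qed

end

theorem theorem3p3:
  fixes X :: "'a set" and P :: "'a set set"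
  assumes "finite X" and "X \<noteq> {}" and "partition_on X P"
  shows "relrank X (T_part X P) (Sigma_part X P)
           = (card (card ` P) choose 2)
             + card {m. \<exists>B1\<in>P. \<exists>B2\<in>P. B1 \<noteq> B2 \<and> card B1 = m \<and> card B2 = m}"
proof -
  interpret pctx X P using assms(1,3) by unfold_locales
  show ?thesis using relrank_Types card_Types by simp
qed


end
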